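(* Fix a positive integer $m$. Then the rate $\frac{\log_2|C_{n,m}|}{\binom{n}{2}}$ of the community code $C_{n,m}$ tends to $0$ as $n\to\infty$.
   Context: For integers $n\geq 2$, $N=\binom{n}{2}$ and $1\leq m\leq n$, the community code $C_{n,m}\subseteq\mathbb{F}_2^N$ consists of exactly those binary vectors of length $N$ that are the upper-triangular (off-diagonal) part of the adjacency matrix of a simple undirected graph on the labeled vertex set $\{1,\ldots,n\}$ which is a disjoint union of cliques, each clique having at least $m$ vertices. The rate of $C_{n,m}$ is $\log_2|C_{n,m}|/N$. *)

theory Defs
  imports "HOL-Analysis.Analysis"
begin

text \<open>Index set of the N = n choose 2 coordinates: pairs (i,j) with 1 <= i < j <= n.\<close>
definition upper_pairs :: "nat \<Rightarrow> (nat \<times> nat) set" where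
  "upper_pairs n = {(i, j). 1 \<le> i \<and> i < j \<and> j \<le> n}"

text \<open>A binary vector in F_2^N indexed by upper_pairs n is identified with its support,
  a subset of upper_pairs n.\<close>
definition upper_part :: "nat \<Rightarrow> (nat \<Rightarrow> nat \<Rightarrow> bool) \<Rightarrow> (nat \<times> nat) set" where
  "upper_part n E = {(i, j) \<in> upper_pairs n. E i j}"

definition community_graph :: "nat \<Rightarrow> nat \<Rightarrow> (nat \<Rightarrow> nat \<Rightarrow> bool) \<Rightarrow> bool" where
  "community_graph n m E \<longleftrightarrow>
     (\<forall>i j. E i j \<longrightarrow> E j i) \<and> (\<forall>i. \<not> E i i) \<and>
     (\<forall>i j. E i j \<longrightarrow> i \<in> {1..n} \<and> j \<in> {1..n}) \<and>
     (\<exists>P. partition_on {1..n} P \<and> (\<forall>B\<in>P. m \<le> card B) \<and>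
          (\<forall>i j. E i j \<longleftrightarrow> i \<noteq> j \<and> (\<exists>B\<in>P. i \<in> B \<and> j \<in> B)))"

definition community_code :: "nat \<Rightarrow> nat \<Rightarrow> (nat \<times> nat) set set" where
  "community_code n m = {upper_part n E | E. community_graph n m E}"

definition code_rate :: "nat \<Rightarrow> nat \<Rightarrow> real" where
  "code_rate n m = log 2 (real (card (community_code n m))) / real (n choose 2)"

end

theory Submission
  imports Defs "HOL-Real_Asymp.Real_Asymp"
begin

lemma trans_E:
  assumes "community_graph n m E" "E i j" "E j k" "i \<noteq> k"
  shows "E i k"
proof -
  from assms(1) have "\<exists>P. partition_on {1..n} P \<and> (\<forall>B\<in>P. m \<le> card B) \<and>
          (\<forall>i j. E i j \<longleftrightarrow> i \<noteq> j \<and> (\<exists>B\<in>P. i \<in> B \<and> j \<in> B))"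
    unfolding community_graph_def by (elim conjE)
  then obtain P where P: "partition_on {1..n} P"
    and EP: "\<And>i j. E i j \<longleftrightarrow> i \<noteq> j \<and> (\<exists>B\<in>P. i \<in> B \<and> j \<in> B)"
    by auto
  from assms(2) obtain B where B: "B \<in> P" "i \<in> B" "j \<in> B" unfolding EP by auto
  from assms(3) obtain B' where B': "B' \<in> P" "j \<in> B'" "k \<in> B'" unfolding EP by auto
  have "disjoint P" using P by (rule partition_onD2)
  then have "B = B'" using B B' by (auto simp: disjoint_def)
  then show ?thesis using B B' assms(4) unfolding EP by auto
qed

lemma code_subset:
  "community_code n m \<subseteq>
     (\<lambda>f. {(i, j) \<in> upper_pairs n. f i = f j}) ` ({1..n} \<rightarrow>\<^sub>E {1..n})"
proof
  fix S assume "S \<in> community_code n m"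
  then obtain E where S: "S = upper_part n E" and G: "community_graph n m E"
    unfolding community_code_def by auto
  define R where "R i j = (i = j \<or> E i j)" for i j
  define f where "f i = (if i \<in> {1..n} then Min {j\<in>{1..n}. R i j} else undefined)" for i
  have sym0: "\<forall>i j. E i j \<longrightarrow> E j i" using G unfolding community_graph_def by (elim conjE) assumption
  have sym: "E i j \<Longrightarrow> E j i" for i j using sym0 by blast
  have Rtrans: "R i j \<Longrightarrow> R j k \<Longrightarrow> R i k" for i j k
    unfolding R_def using trans_E[OF G, of i j k] by auto
  have Rsym: "R i j \<Longrightarrow> R j i" for i j unfolding R_def using sym[of i j] by auto
  have fin: "finite {j\<in>{1..n}. R i j}" for i by simp
  have fmem: "i \<in> {1..n} \<Longrightarrow> f i \<in> {j\<in>{1..n}. R i j}" for i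
  proof -
    assume i: "i \<in> {1..n}"
    have "{j\<in>{1..n}. R i j} \<noteq> {}" using i by (auto simp: R_def)
    then show ?thesis using Min_in[OF fin, of i] i unfolding f_def by simp
  qed
  have key: "(f i = f j) = R i j" if i: "i \<in> {1..n}" and j: "j \<in> {1..n}" for i j
  proof
    assume "f i = f j"
    then have "R i (f i)" "R j (f i)" using fmem[OF i] fmem[OF j] by auto
    then show "R i j" using Rtrans Rsym by metis
  next
    assume "R i j"
    then have "{k\<in>{1..n}. R i k} = {k\<in>{1..n}. R j k}" using Rtrans Rsym by metis
    then show "f i = f j" using i j unfolding f_def by simp
  qed
  have "f \<in> {1..n} \<rightarrow>\<^sub>E {1..n}" using fmem unfolding f_def by auto
  moreover have "S = {(i, j) \<in> upper_pairs n. f i = f j}"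
  proof -
    have "(i,j) \<in> S \<longleftrightarrow> (i,j) \<in> {(i, j) \<in> upper_pairs n. f i = f j}" for i j
    proof (cases "(i,j) \<in> upper_pairs n")
      case True
      then have "i \<in> {1..n}" "j \<in> {1..n}" "i \<noteq> j" by (auto simp: upper_pairs_def)
      then show ?thesis using True key[of i j] unfolding S upper_part_def R_def by auto
    next
      case False then show ?thesis unfolding S upper_part_def by auto
    qed
    then show ?thesis by auto
  qed
  ultimately show "S \<in> (\<lambda>f. {(i, j) \<in> upper_pairs n. f i = f j}) ` ({1..n} \<rightarrow>\<^sub>E {1..n})"
    by blast
qed

lemma card_code: "card (community_code n m) \<le> n ^ n"
proof -
  have "card (community_code n m) \<le> card ((\<lambda>f. {(i, j) \<in> upper_pairs n. f i = f j}) ` ({1..n} \<rightarrow>\<^sub>E {1..n}))"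
    by (rule card_mono[OF _ code_subset]) (simp add: finite_PiE)
  also have "\<dots> \<le> card ({1..n::nat} \<rightarrow>\<^sub>E {1..n::nat})"
    by (rule card_image_le) (simp add: finite_PiE)
  also have "\<dots> = n ^ n" by (simp add: card_PiE)
  finally show ?thesis .
qed

lemma ch: "n \<ge> 2 \<Longrightarrow> real (n choose 2) = real n * (real n - 1) / 2"
proof -
  assume "n \<ge> 2"
  have "even (n * (n - 1))" by (cases "even n") auto
  then have "real (n * (n - 1) div 2) = real (n * (n-1)) / 2" by (simp add: real_of_nat_div)
  then show ?thesis using \<open>n \<ge> 2\<close> by (simp add: choose_two of_nat_diff)
qed

lemma rate_bounds:
  assumes "n \<ge> 2"
  shows "0 \<le> code_rate n m" "code_rate n m \<le> 2 * (real n * log 2 (real n)) / (real n * (real n - 1))"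
proof -
  have pos: "real (n choose 2) > 0" using assms by simp
  have l0: "0 \<le> log 2 (real (card (community_code n m)))"
    by (cases "card (community_code n m) = 0") (auto simp: log_def)
  then show "0 \<le> code_rate n m" unfolding code_rate_def using pos by simp
  have L: "log 2 (real (card (community_code n m))) \<le> real n * log 2 (real n)"
  proof (cases "card (community_code n m) = 0")
    case True then show ?thesis using assms by (simp add: log_def)
  next
    case False
    have "log 2 (real (card (community_code n m))) \<le> log 2 (real (n ^ n))"
      using False card_code[of n m] assms by (subst log_le_cancel_iff) auto
    also have "\<dots> = real n * log 2 (real n)" using assms by (simp add: log_nat_power)
    finally show ?thesis .
  qed
  have "code_rate n m = log 2 (real (card (community_code n m))) / (real n * (real n - 1) / 2)"
    unfolding code_rate_def ch[OF assms] ..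
  also have "\<dots> \<le> (real n * log 2 (real n)) / (real n * (real n - 1) / 2)"
    by (rule divide_right_mono[OF L]) (use assms in simp)
  also have "\<dots> = 2 * (real n * log 2 (real n)) / (real n * (real n - 1))" by simp
  finally show "code_rate n m \<le> 2 * (real n * log 2 (real n)) / (real n * (real n - 1))" .
qed

theorem lemma5:
  fixes m :: nat
  assumes "1 \<le> m"
  shows "(\<lambda>n. code_rate n m) \<longlonglongrightarrow> 0"
proof (rule tendsto_sandwich[where f = "\<lambda>n. 0" and h = "\<lambda>n. 2 * (real n * log 2 (real n)) / (real n * (real n - 1))"])
  show "\<forall>\<^sub>F n in sequentially. 0 \<le> code_rate n m"
    using rate_bounds(1) eventually_sequentially by blast
  show "\<forall>\<^sub>F n in sequentially. code_rate n m \<le> 2 * (real n * log 2 (real n)) / (real n * (real n - 1))"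
    using rate_bounds(2) eventually_sequentially by blast
  show "(\<lambda>n. 0) \<longlonglongrightarrow> (0::real)" by simp
  show "(\<lambda>n. 2 * (real n * log 2 (real n)) / (real n * (real n - 1))) \<longlonglongrightarrow> 0"
    by real_asymp
qed
end
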